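(* Let $H:2^M\to\mathbb{R}$ be a function with $H(\emptyset)=0$, and let $T^1,\dots,T^n\subseteq M$ satisfy $\bigcap_{i=1}^nT^i=\emptyset$. Suppose that either (1) $H$ is supermodular, or (2) for every $1\le i,j\le n$, $T^i\cup T^j\in\{T^i,T^j\}$. Then $$\sum_{i=1}^nH(T^i)\le\sum_{i=1}^{n-1}H\Big(T^{i+1}\cup\bigcap_{\ell=1}^{i}T^\ell\Big).$$
   Context: $M$ is a finite set. A function $H:2^M\to\mathbb R$ is supermodular if $H(S)+H(T)\le H(S\cup T)+H(S\cap T)$ for all $S,T\subseteq M$. *)

theory Defs
  imports Complex_Main
begin

definition supermodular :: "'a set \<Rightarrow> ('a set \<Rightarrow> real) \<Rightarrow> bool" where
  "supermodular M H \<longleftrightarrow>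
     (\<forall>S U. S \<subseteq> M \<longrightarrow> U \<subseteq> M \<longrightarrow> H S + H U \<le> H (S \<union> U) + H (S \<inter> U))"

end

theory Submission
  imports Defs
begin

lemma inter_Suc: "(\<Inter>l\<in>{1..Suc i}. T l) = (\<Inter>l\<in>{1..i}. T l) \<inter> T (Suc i)"
  by (auto simp: atLeastAtMostSuc_conv)

lemma chain_lemma:
  fixes T :: "nat \<Rightarrow> 'a set"
  assumes ch: "\<forall>i\<in>{1..n}. \<forall>j\<in>{1..n}. T i \<union> T j \<in> {T i, T j}"
  shows "1 \<le> i \<Longrightarrow> i \<le> n \<Longrightarrow> \<exists>j\<in>{1..i}. (\<Inter>l\<in>{1..i}. T l) = T j"
proof (induction i)
  case 0 then show ?case by simp
next
  case (Suc i)
  show ?case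
  proof (cases "i = 0")
    case True then show ?thesis by simp
  next
    case False
    then obtain j where j: "j \<in> {1..i}" "(\<Inter>l\<in>{1..i}. T l) = T j" using Suc by auto
    have "T j \<union> T (Suc i) \<in> {T j, T (Suc i)}" using ch j Suc.prems by auto
    then have "T j \<inter> T (Suc i) = T j \<or> T j \<inter> T (Suc i) = T (Suc i)" by blast
    then show ?thesis using j unfolding inter_Suc
      by (metis atLeastAtMost_iff le_SucI Suc.prems(1) order_refl)
  qed
qed

theorem claim4p4:
  fixes M :: "'a set" and H :: "'a set \<Rightarrow> real" and T :: "nat \<Rightarrow> 'a set" and n :: nat
  assumes "finite M"
    and "H {} = 0"
    and "\<forall>i\<in>{1..n}. T i \<subseteq> M"
    and "(\<Inter>i\<in>{1..n}. T i) = {}"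
    and "supermodular M H \<or> (\<forall>i\<in>{1..n}. \<forall>j\<in>{1..n}. T i \<union> T j \<in> {T i, T j})"
  shows "(\<Sum>i=1..n. H (T i)) \<le> (\<Sum>i=1..n-1. H (T (i+1) \<union> (\<Inter>l\<in>{1..i}. T l)))"
proof -
  define P where "P i = (\<Inter>l\<in>{1..i}. T l)" for i
  have key: "H (P i) + H (T (Suc i)) \<le> H (T (Suc i) \<union> P i) + H (P (Suc i))"
    if i: "1 \<le> i" "Suc i \<le> n" for i
  proof (cases "supermodular M H")
    case True
    have "P i \<subseteq> T 1" unfolding P_def using i by auto
    moreover have "T 1 \<subseteq> M" using assms(3) i by auto
    ultimately have "P i \<subseteq> M" by blast
    moreover have "T (Suc i) \<subseteq> M" using assms(3) i by auto
    ultimately have "H (P i) + H (T (Suc i)) \<le> H (P i \<union> T (Suc i)) + H (P i \<inter> T (Suc i))"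
      using True unfolding supermodular_def by blast
    then show ?thesis unfolding P_def inter_Suc by (simp add: Un_commute)
  next
    case False
    then have ch: "\<forall>i\<in>{1..n}. \<forall>j\<in>{1..n}. T i \<union> T j \<in> {T i, T j}" using assms(5) by blast
    obtain j where j: "j \<in> {1..i}" "P i = T j" using chain_lemma[OF ch, of i] i unfolding P_def by auto
    have "T j \<union> T (Suc i) \<in> {T j, T (Suc i)}" using ch j i by auto
    then have "(P i \<union> T (Suc i) = P i \<and> P i \<inter> T (Suc i) = T (Suc i)) \<or>
               (P i \<union> T (Suc i) = T (Suc i) \<and> P i \<inter> T (Suc i) = P i)" using j by blast
    then show ?thesis unfolding P_def inter_Suc by (auto simp: Un_commute)
  qed
  have main: "1 \<le> k \<Longrightarrow> k \<le> n \<Longrightarrow>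
     (\<Sum>i=1..k. H (T i)) \<le> (\<Sum>i=1..k-1. H (T (i+1) \<union> P i)) + H (P k)" for k
  proof (induction k)
    case 0 then show ?case by simp
  next
    case (Suc k)
    show ?case
    proof (cases "k = 0")
      case True then show ?thesis by (simp add: P_def)
    next
      case False
      have IH: "(\<Sum>i=1..k. H (T i)) \<le> (\<Sum>i=1..k-1. H (T (i+1) \<union> P i)) + H (P k)"
        using Suc False by simp
      have k: "1 \<le> k" "Suc k \<le> n" using False Suc.prems by auto
      have s1: "(\<Sum>i=1..Suc k. H (T i)) = (\<Sum>i=1..k. H (T i)) + H (T (Suc k))" by simp
      have s2: "(\<Sum>i=1..Suc k - 1. H (T (i+1) \<union> P i)) = (\<Sum>i=1..k-1. H (T (i+1) \<union> P i)) + H (T (Suc k) \<union> P k)"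
        using False by (cases k) (auto)
      show ?thesis using IH key[OF k] s1 s2 by linarith
    qed
  qed
  show ?thesis
  proof (cases "n = 0")
    case True
    then show ?thesis using assms(4) by simp
  next
    case False
    have "P n = {}" using assms(4) unfolding P_def by simp
    then show ?thesis using main[of n] False assms(2) unfolding P_def by simp
  qed
qed

end
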